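(* Let $1\le m\le N$, $a\in V$ and $b\in\wedge^m(V)$. Then $\mathbf{x}\wedge b\in\mathcal{P}_1\otimes\wedge^{m+1}(V)$ and $$\sum_{i=1}^Na_i\mathcal{D}_i(\mathbf{x}\wedge b)=(1-\gamma\kappa)\,a\wedge b,$$ where the $\mathcal{D}_i$ are the Dunkl operators on $\mathcal{P}\otimes\wedge^{m+1}(V)$. In particular $\mathbf{x}\wedge b$ is singular for $\kappa=1/\gamma$, i.e. $\mathcal{D}_i(\mathbf{x}\wedge b)=0$ for all $1\le i\le N$ when $\kappa=1/\gamma$.
   Context: $R\subset\mathbb{R}^N$ is a reduced root system with $\operatorname{span}_{\mathbb{R}}R=\mathbb{R}^N$, $|v|^2=2$ for all $v\in R$, positive roots $R_+$; $W$ is the reflection group generated by $\sigma_v\colon x\mapsto x-\langle x,v\rangle v$, assumed to have one conjugacy class of reflections, so $W$ is indecomposable and its reflection representation $\tau$ on $V=\mathbb{R}^N$ is irreducible. $\gamma:=2\#R_+/N$ (the Coxeter number). $\{u_i\}$ is the standard orthonormal basis of $V$ and $\mathbf{x}:=\sum_{i=1}^Nx_i\otimes u_i\in\mathcal{P}_1\otimes V$, where $\mathcal{P}_1$ denotes linear polynomials in $x=(x_1,\dots,x_N)$; wedge products with $\mathbf{x}$ are taken in the $\wedge$-factor. $\tau_k$ is the representation of $W$ on $\wedge^k(V)$ induced by $\tau$. $W$ acts on $\mathcal{P}\otimes\wedge^k(V)$ by $w(p(x)\otimes b)=p(xw)\otimes\tau_k(w)b$, and the Dunkl operators (with constant parameter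 $\kappa$) are $\mathcal{D}_i(p\otimes b)=\frac{\partial p}{\partial x_i}\otimes b+\kappa\sum_{v\in R_+}\frac{p(x)-p(x\sigma_v)}{\langle x,v\rangle}v_i\otimes\tau_k(\sigma_v)b$, extended linearly. *)

theory Defs
  imports "HOL-Analysis.Analysis"
begin

text \<open>V = real^'n with standard orthonormal basis axis i 1.
  An element of the exterior power of degree k is represented by its
  alternating coefficient function on lists of indices: b is supported on
  lists of length k and changes sign when two positions are swapped;
  b corresponds to the sum over increasing index lists I of b I times u_I.\<close>

definition ext_space :: "nat \<Rightarrow> ('n list \<Rightarrow> real) set" where
  "ext_space k = {b. (\<forall>l. length l \<noteq> k \<longrightarrow> b l = 0) \<and>
      (\<forall>l i j. i < length l \<longrightarrow> j < length l \<longrightarrow> i \<noteq> j \<longrightarrow>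
          b (l[i := l ! j, j := l ! i]) = - b l)}"

definition wedge :: "real^'n \<Rightarrow> ('n list \<Rightarrow> real) \<Rightarrow> ('n list \<Rightarrow> real)" where
  "wedge a b = (\<lambda>l. \<Sum>j<length l. (-1) ^ j * (a $ (l ! j)) * b (take j l @ drop (Suc j) l))"

text \<open>Reflection along v (for roots, |v|^2 = 2).\<close>
definition refl :: "real^'n \<Rightarrow> real^'n \<Rightarrow> real^'n" where
  "refl v x = x - (x \<bullet> v) *\<^sub>R v"

definition tau :: "(real^'n \<Rightarrow> real^'n) \<Rightarrow> ('n list \<Rightarrow> real) \<Rightarrow> ('n list \<Rightarrow> real)" where
  "tau g b = (\<lambda>l. \<Sum>js \<in> {js. set js \<subseteq> UNIV \<and> length js = length l}.
       (\<Prod>t<length l. g (axis (js ! t) 1) $ (l ! t)) * b js)"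

inductive_set refl_group :: "(real^'n) set \<Rightarrow> (real^'n \<Rightarrow> real^'n) set" for R where
  id_in: "id \<in> refl_group R"
| step: "v \<in> R \<Longrightarrow> w \<in> refl_group R \<Longrightarrow> refl v \<circ> w \<in> refl_group R"

text \<open>Reduced root system (Coxeter type: not necessarily crystallographic),
  normalised |v|^2 = 2, spanning V.\<close>
definition root_system :: "(real^'n) set \<Rightarrow> bool" where
  "root_system R \<longleftrightarrow> finite R \<and> 0 \<notin> R \<and> span R = UNIV \<and>
     (\<forall>v\<in>R. v \<bullet> v = 2) \<and> (\<forall>u\<in>R. \<forall>v\<in>R. refl u v \<in> R) \<and>
     (\<forall>v\<in>R. \<forall>c::real. c *\<^sub>R v \<in> R \<longrightarrow> c = 1 \<or> c = -1)"

definition positive_system :: "(real^'n) set \<Rightarrow> (real^'n) set \<Rightarrow> bool" where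
  "positive_system R Rp \<longleftrightarrow> (\<exists>u. (\<forall>v\<in>R. v \<bullet> u \<noteq> 0) \<and> Rp = {v\<in>R. v \<bullet> u > 0})"

text \<open>All reflections of W are conjugate: w sigma_u w^-1 = sigma_(w u).\<close>
definition one_refl_class :: "(real^'n) set \<Rightarrow> bool" where
  "one_refl_class R \<longleftrightarrow> (\<forall>u\<in>R. \<forall>v\<in>R. \<exists>w\<in>refl_group R. refl (w u) = refl v)"

definition coxeter_number :: "(real^'n) set \<Rightarrow> real" where
  "coxeter_number Rp = 2 * real (card Rp) / real CARD('n)"

definition dderiv :: "real^'n \<Rightarrow> (real^'n \<Rightarrow> 'a \<Rightarrow> real) \<Rightarrow> real^'n \<Rightarrow> 'a \<Rightarrow> real" where
  "dderiv v f x = (\<lambda>l. deriv (\<lambda>t. f (x + t *\<^sub>R v) l) 0)"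

text \<open>(f(x) - f(x sigma_v)) / <x,v>, extended continuously (for polynomial f) to
  the hyperplane <x,v> = 0, where the value is the directional derivative along v.\<close>
definition dquot :: "real^'n \<Rightarrow> (real^'n \<Rightarrow> 'a \<Rightarrow> real) \<Rightarrow> real^'n \<Rightarrow> 'a \<Rightarrow> real" where
  "dquot v f x = (if x \<bullet> v = 0 then dderiv v f x
                  else (\<lambda>l. (f x l - f (refl v x) l) / (x \<bullet> v)))"

definition dunkl :: "(real^'n) set \<Rightarrow> real \<Rightarrow> 'n \<Rightarrow> (real^'n \<Rightarrow> 'n list \<Rightarrow> real)
                      \<Rightarrow> real^'n \<Rightarrow> 'n list \<Rightarrow> real" where
  "dunkl Rp \<kappa> i f x = (\<lambda>l. dderiv (axis i 1) f x l +
      \<kappa> * (\<Sum>v\<in>Rp. v $ i * tau (refl v) (dquot v f x) l))"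

end

theory Submission
  imports Defs
begin


definition swp :: "nat \<Rightarrow> nat \<Rightarrow> 'a list \<Rightarrow> 'a list" where
  "swp i j l = l[i := l ! j, j := l ! i]"

definition alt_adj :: "('a list \<Rightarrow> real) \<Rightarrow> bool" where
  "alt_adj c \<longleftrightarrow> (\<forall>l k. Suc k < length l \<longrightarrow> c (swp k (Suc k) l) = - c l)"

definition iota :: "real^'n \<Rightarrow> ('n list \<Rightarrow> real) \<Rightarrow> 'n list \<Rightarrow> real" where
  "iota v c = (\<lambda>js. \<Sum>k\<in>UNIV. v $ k * c (k # js))"

lemma swp_Cons: "swp (Suc i) (Suc j) (x # l) = x # swp i j l"
  by (simp add: swp_def)

lemma swp01: "swp 0 (Suc 0) (a # b # l) = b # a # l"
  by (simp add: swp_def)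

lemma alt_adj_swap01: "alt_adj c \<Longrightarrow> c (k # i # js) = - c (i # k # js)"
  unfolding alt_adj_def by (metis swp01 length_Cons zero_less_Suc Suc_less_eq)

lemma alt_adj_Cons: "alt_adj c \<Longrightarrow> alt_adj (\<lambda>js. c (i # js))"
  unfolding alt_adj_def by (metis swp_Cons length_Cons Suc_less_eq)

lemma alt_adj_iota: assumes "alt_adj c" shows "alt_adj (iota v c)"
  unfolding alt_adj_def iota_def
proof (intro allI impI)
  fix l :: "'a list" and k assume "Suc k < length l"
  then have "c (k' # swp k (Suc k) l) = - c (k' # l)" for k'
  proof -
    have "c (swp (Suc k) (Suc (Suc k)) (k' # l)) = - c (k' # l)"
      using assms \<open>Suc k < length l\<close> unfolding alt_adj_def by simp
    then show ?thesis by (simp add: swp_Cons)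
  qed
  then show "(\<Sum>k'\<in>UNIV. v $ k' * c (k' # swp k (Suc k) l)) = - (\<Sum>k'\<in>UNIV. v $ k' * c (k' # l))"
    by (simp add: sum_negf[symmetric])
qed

lemma iota_iota: "alt_adj c \<Longrightarrow> iota v (iota v c) js = 0"
proof -
  assume a: "alt_adj c"
  define S where "S = (\<Sum>k\<in>UNIV. \<Sum>k'\<in>UNIV. v $ k * v $ k' * c (k' # k # js))"
  have "S = (\<Sum>k\<in>UNIV. \<Sum>k'\<in>UNIV. v $ k' * v $ k * c (k # k' # js))"
    unfolding S_def by (rule sum.swap)
  also have "\<dots> = (\<Sum>k\<in>UNIV. \<Sum>k'\<in>UNIV. - (v $ k * v $ k' * c (k' # k # js)))"
  proof (intro sum.cong refl)
    fix k k' have "c (k # k' # js) = - c (k' # k # js)" by (rule alt_adj_swap01[OF a])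
    then show "v $ k' * v $ k * c (k # k' # js) = - (v $ k * v $ k' * c (k' # k # js))"
      by simp
  qed
  also have "\<dots> = - S"
    unfolding S_def by (simp add: sum_negf)
  finally have "S = 0" by simp
  then show ?thesis unfolding iota_def S_def
    by (simp add: sum_distrib_left mult.assoc)
qed

lemma wedge_Nil[simp]: "wedge a c [] = 0"
  by (simp add: wedge_def)

lemma wedge_Cons: "wedge a c (i # l) = a $ i * c l - wedge a (\<lambda>js. c (i # js)) l"
proof -
  have "wedge a c (i # l) = (\<Sum>j<Suc (length l). (-1) ^ j * (a $ ((i # l) ! j)) * c (take j (i # l) @ drop (Suc j) (i # l)))"
    unfolding wedge_def by simp
  also have "\<dots> = a $ i * c l + (\<Sum>j<length l. (-1) ^ Suc j * (a $ ((i # l) ! Suc j)) * c (take (Suc j) (i # l) @ drop (Suc (Suc j)) (i # l)))"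
    by (subst sum.lessThan_Suc_shift) simp
  also have "\<dots> = a $ i * c l - wedge a (\<lambda>js. c (i # js)) l"
    unfolding wedge_def by (simp add: sum_negf[symmetric])
  finally show ?thesis .
qed

lemma wedge_sum_c: "wedge a (\<lambda>js. \<Sum>k\<in>S. f k js) l = (\<Sum>k\<in>S. wedge a (f k) l)"
  unfolding wedge_def by (simp add: sum_distrib_left algebra_simps sum.swap[of _ S])

lemma wedge_scale_c: "wedge a (\<lambda>js. x * c js) l = x * wedge a c l"
  unfolding wedge_def by (simp add: sum_distrib_left algebra_simps)

lemma wedge_diff_c: "wedge a (\<lambda>js. c js - d js) l = wedge a c l - wedge a d l"
  unfolding wedge_def by (simp add: sum_subtractf[symmetric] algebra_simps)

lemma wedge_neg_c: "wedge a (\<lambda>js. - c js) l = - wedge a c l"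
  unfolding wedge_def by (simp add: sum_negf[symmetric] algebra_simps)

lemma wedge_zero_c: "wedge a (\<lambda>js. 0) l = 0"
  unfolding wedge_def by simp

lemma wedge_add_v: "wedge (x + y) c l = wedge x c l + wedge y c l"
  unfolding wedge_def by (simp add: sum.distrib algebra_simps)

lemma wedge_scale_v: "wedge (t *\<^sub>R x) c l = t * wedge x c l"
  unfolding wedge_def by (simp add: sum_distrib_left algebra_simps)

lemma linear_wedge: "linear (\<lambda>x. wedge x c l)"
  by (rule linearI) (simp_all add: wedge_add_v wedge_scale_v)

lemma wedge_vv: "wedge v (wedge v c) l = 0"
proof (induction l arbitrary: c)
  case Nil then show ?case by simp
next
  case (Cons i l)
  have "(\<lambda>js. wedge v c (i # js)) = (\<lambda>js. v $ i * c js - wedge v (\<lambda>js. c (i # js)) js)"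
    by (simp add: wedge_Cons)
  then show ?case
    by (simp add: wedge_Cons wedge_diff_c wedge_scale_c Cons.IH)
qed

lemma wedge_alt_adj:
  fixes a :: "real^'n" and b :: "'n list \<Rightarrow> real"
  shows "alt_adj b \<Longrightarrow> alt_adj (wedge a b)"
  unfolding alt_adj_def
proof (intro allI impI)
  fix l :: "'n list" and k assume "\<forall>l k. Suc k < length l \<longrightarrow> b (swp k (Suc k) l) = - b l" "Suc k < length l"
  then show "wedge a b (swp k (Suc k) l) = - wedge a b l"
  proof (induction l arbitrary: k b)
    case Nil then show ?case by simp
  next
    case (Cons i l)
    show ?case
    proof (cases k)
      case 0
      then obtain i' l'' where l: "l = i' # l''" using Cons.prems(2) by (cases l) auto
      have ab: "alt_adj b" using Cons.prems(1) unfolding alt_adj_def by blast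
      have bs: "(\<lambda>js. b (i' # i # js)) = (\<lambda>js. - b (i # i' # js))"
        by (rule ext) (rule alt_adj_swap01[OF ab])
      show ?thesis using 0 l
        by (simp add: swp01 wedge_Cons bs wedge_neg_c)
    next
      case (Suc k')
      have h: "\<forall>l k. Suc k < length l \<longrightarrow> b (i # swp k (Suc k) l) = - b (i # l)"
      proof (intro allI impI)
        fix l' :: "'n list" and k2 assume "Suc k2 < length l'"
        then have "b (swp (Suc k2) (Suc (Suc k2)) (i # l')) = - b (i # l')"
          using Cons.prems(1) by simp
        then show "b (i # swp k2 (Suc k2) l') = - b (i # l')" by (simp add: swp_Cons)
      qed
      have "wedge a (\<lambda>js. b (i # js)) (swp k' (Suc k') l) = - wedge a (\<lambda>js. b (i # js)) l"
        using Cons.IH[of "\<lambda>js. b (i # js)" k'] h Cons.prems(2) Suc by simp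
      moreover have "b (swp k' (Suc k') l) = - b l"
        using Cons.prems(1) Cons.prems(2) Suc by (simp add: swp_Cons)
      ultimately show ?thesis using Suc
        by (simp add: swp_Cons wedge_Cons)
    qed
  qed
qed

lemma swp_decomp:
  assumes "Suc (Suc i + d) < length l"
  shows "swp i (i + Suc (Suc d)) l = swp i (Suc i) (swp (Suc i) (Suc i + Suc d) (swp i (Suc i) l))"
  using assms by (auto simp: swp_def nth_list_update intro!: nth_equalityI)

lemma alt_lt:
  assumes "alt_adj c"
  shows "i + Suc d < length l \<Longrightarrow> c (swp i (i + Suc d) l) = - c l"
proof (induction d arbitrary: i l)
  case 0 then show ?case using assms unfolding alt_adj_def by simp
next
  case (Suc d)
  have len: "length (swp a b l) = length l" for a b l by (simp add: swp_def)
  have "c (swp i (i + Suc (Suc d)) l) = c (swp i (Suc i) (swp (Suc i) (Suc i + Suc d) (swp i (Suc i) l)))"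
  proof -
    have "Suc (Suc i + d) < length l" using Suc.prems by simp
    then show ?thesis by (simp only: swp_decomp)
  qed
  also have "\<dots> = - c (swp (Suc i) (Suc i + Suc d) (swp i (Suc i) l))"
    using assms Suc.prems unfolding alt_adj_def by (simp add: len)
  also have "\<dots> = c (swp i (Suc i) l)"
    using Suc.IH[of "Suc i" "swp i (Suc i) l"] Suc.prems by (simp add: len)
  also have "\<dots> = - c l"
    using assms Suc.prems unfolding alt_adj_def by simp
  finally show ?case .
qed

lemma alt_full:
  assumes "alt_adj c" "i < length l" "j < length l" "i \<noteq> j"
  shows "c (l[i := l ! j, j := l ! i]) = - c l"
proof (cases "i < j")
  case True
  define d where "d = j - i - 1"
  have "j = i + Suc d" using True unfolding d_def by simp
  then show ?thesis using alt_lt[OF assms(1), of i d l] assms by (simp add: swp_def)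
next
  case False
  define d where "d = i - j - 1"
  have d: "i = j + Suc d" using False assms(4) unfolding d_def by simp
  have eq: "l[i := l ! j, j := l ! i] = l[j := l ! i, i := l ! j]"
    using assms(4) by (rule list_update_swap)
  have e: "c (swp j (j + Suc d) l) = - c l"
    by (rule alt_lt[OF assms(1)]) (use assms d in simp)
  show ?thesis unfolding eq using e unfolding swp_def d[symmetric] .
qed

lemma ext_alt_adj:
  assumes "b \<in> ext_space m" shows "alt_adj b"
proof -
  have H: "\<And>l i j. i < length l \<Longrightarrow> j < length l \<Longrightarrow> i \<noteq> j \<Longrightarrow> b (l[i := l ! j, j := l ! i]) = - b l"
    using assms unfolding ext_space_def by blast
  show ?thesis unfolding alt_adj_def swp_def using H by simp
qed



lemma lists_Suc: "{js::'a list. length js = Suc n} = (\<lambda>(k, js). k # js) ` (UNIV \<times> {js. length js = n})"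
  by (auto simp: length_Suc_conv image_iff)

lemma tau_Nil: "tau g c [] = c []"
  unfolding tau_def by simp

lemma tau_Cons: "tau g c (i # l) = (\<Sum>k\<in>UNIV. g (axis k 1) $ i * tau g (\<lambda>js. c (k # js)) l)"
proof -
  let ?L = "{js::'a list. length js = length l}"
  have "tau g c (i # l) = (\<Sum>js\<in>(\<lambda>(k, js). k # js) ` (UNIV \<times> ?L). (\<Prod>t<Suc (length l). g (axis (js ! t) 1) $ ((i # l) ! t)) * c js)"
    unfolding tau_def by (simp only: length_Cons lists_Suc subset_UNIV simp_thms)
  also have "\<dots> = (\<Sum>(k, js)\<in>UNIV \<times> ?L. (\<Prod>t<Suc (length l). g (axis ((k # js) ! t) 1) $ ((i # l) ! t)) * c (k # js))"
    by (subst sum.reindex) (auto simp: inj_on_def intro!: sum.cong split: prod.splits)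
  also have "\<dots> = (\<Sum>k\<in>UNIV. \<Sum>js\<in>?L. g (axis k 1) $ i * ((\<Prod>t<length l. g (axis (js ! t) 1) $ (l ! t)) * c (k # js)))"
    by (simp del: prod.lessThan_Suc add: sum.cartesian_product[symmetric] prod.lessThan_Suc_shift mult.assoc)
  also have "\<dots> = (\<Sum>k\<in>UNIV. g (axis k 1) $ i * tau g (\<lambda>js. c (k # js)) l)"
    unfolding tau_def by (simp add: sum_distrib_left)
  finally show ?thesis .
qed

lemma tau_sum_c: "tau g (\<lambda>js. \<Sum>k\<in>S. f k js) l = (\<Sum>k\<in>S. tau g (f k) l)"
  unfolding tau_def by (simp add: sum_distrib_left sum.swap[of _ S])

lemma tau_scale_c: "tau g (\<lambda>js. x * c js) l = x * tau g c l"
  unfolding tau_def by (simp add: sum_distrib_left algebra_simps)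

lemma axis1_nth: "axis k (1::real) $ i = (if k = i then 1 else 0)"
  by (simp add: axis_def)

lemma inner_axis1: "axis k (1::real) \<bullet> v = v $ k"
  by (simp add: inner_axis')

lemma refl_axis: "refl v (axis k 1) $ i = (if k = i then 1 else 0) - v $ k * v $ i"
  unfolding refl_def by (simp only: vector_minus_component vector_scaleR_component inner_axis1 axis1_nth) simp

lemma iota_Cons_swap:
  assumes "alt_adj c"
  shows "(\<lambda>js. iota v c (i # js)) = (\<lambda>js. - iota v (\<lambda>js. c (i # js)) js)"
proof (rule ext)
  fix js
  have "c (k # i # js) = - c (i # k # js)" for k by (rule alt_adj_swap01[OF assms])
  then show "iota v c (i # js) = - iota v (\<lambda>js. c (i # js)) js"
    unfolding iota_def by (simp add: sum_negf[symmetric])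
qed

lemma tau_refl_alt:
  assumes "alt_adj c"
  shows "tau (refl v) c l = c l - wedge v (iota v c) l"
  using assms
proof (induction l arbitrary: c)
  case Nil then show ?case by (simp add: tau_Nil)
next
  case (Cons i l)
  let ?T = "\<lambda>k. tau (refl v) (\<lambda>js. c (k # js)) l"
  have io: "tau (refl v) (iota v c) l = (\<Sum>k\<in>UNIV. v $ k * ?T k)"
    unfolding iota_def by (simp add: tau_sum_c tau_scale_c)
  have "tau (refl v) c (i # l) = (\<Sum>k\<in>UNIV. ((if k = i then 1 else 0) - v $ k * v $ i) * ?T k)"
    by (simp add: tau_Cons refl_axis)
  also have "\<dots> = (\<Sum>k\<in>UNIV. (if k = i then ?T k else 0) - v $ i * (v $ k * ?T k))"
    by (intro sum.cong refl) (simp add: algebra_simps)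
  also have "\<dots> = ?T i - v $ i * tau (refl v) (iota v c) l"
    unfolding io by (simp add: sum_subtractf sum_distrib_left)
  also have "\<dots> = c (i # l) - wedge v (iota v c) (i # l)"
  proof -
    have a1: "alt_adj (\<lambda>js. c (i # js))" by (rule alt_adj_Cons[OF Cons.prems])
    have a2: "alt_adj (iota v c)" by (rule alt_adj_iota[OF Cons.prems])
    have ii: "iota v (iota v c) = (\<lambda>js. 0)" using iota_iota[OF Cons.prems] by auto
    show ?thesis
      using Cons.IH[OF a1] Cons.IH[OF a2]
      by (simp add: ii wedge_zero_c wedge_Cons iota_Cons_swap[OF Cons.prems] wedge_neg_c algebra_simps)
  qed
  finally show ?case .
qed

lemma iota_wedge: "iota v (wedge v b) js = (v \<bullet> v) * b js - wedge v (iota v b) js"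
  unfolding iota_def
  by (simp add: wedge_Cons wedge_sum_c wedge_scale_c right_diff_distrib sum_subtractf
      inner_vec_def sum_distrib_right mult.assoc)

lemma tau_refl_wedge:
  assumes "v \<bullet> v = 2" "alt_adj b"
  shows "tau (refl v) (wedge v b) l = - wedge v b l"
proof -
  have "iota v (wedge v b) = (\<lambda>js. 2 * b js - wedge v (iota v b) js)"
    using iota_wedge[of v b] assms(1) by auto
  then have "wedge v (iota v (wedge v b)) l = 2 * wedge v b l"
    by (simp add: wedge_diff_c wedge_scale_c wedge_vv)
  then show ?thesis
    using tau_refl_alt[OF wedge_alt_adj[OF assms(2), of v], of v l] by simp
qed

lemma wedge_diff_v: "wedge (x - y) c l = wedge x c l - wedge y c l"
  unfolding wedge_def by (simp add: sum_subtractf[symmetric] algebra_simps)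

lemma wedge_sum_v: "wedge (\<Sum>v\<in>S. f v) c l = (\<Sum>v\<in>S. wedge (f v) c l)"
  using linear_sum[OF linear_wedge[of c l], of f S] by simp

lemma dderiv_wedge: "dderiv u (\<lambda>y. wedge y b) x = wedge u b"
proof (rule ext)
  fix l
  have e: "(\<lambda>t. wedge (x + t *\<^sub>R u) b l) = (\<lambda>t. wedge x b l + t * wedge u b l)"
    by (simp add: wedge_add_v wedge_scale_v)
  have "((\<lambda>t. wedge x b l + t * wedge u b l) has_real_derivative wedge u b l) (at 0)"
    by (auto intro!: derivative_eq_intros)
  then show "dderiv u (\<lambda>y. wedge y b) x l = wedge u b l"
    unfolding dderiv_def e by (rule DERIV_imp_deriv)
qed

lemma dquot_wedge: "dquot v (\<lambda>y. wedge y b) x = wedge v b"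
proof (cases "x \<bullet> v = 0")
  case True then show ?thesis by (simp add: dquot_def dderiv_wedge)
next
  case False
  show ?thesis
  proof (rule ext)
    fix l
    have "wedge (refl v x) b l = wedge x b l - (x \<bullet> v) * wedge v b l"
      by (simp add: refl_def wedge_diff_v wedge_scale_v)
    then show "dquot v (\<lambda>y. wedge y b) x l = wedge v b l"
      using False by (simp add: dquot_def)
  qed
qed

lemma dunkl_wedge:
  assumes "\<forall>v\<in>Rp. v \<bullet> v = 2" "alt_adj b"
  shows "dunkl Rp \<kappa> i (\<lambda>y. wedge y b) x l = wedge (axis i 1) b l - \<kappa> * wedge (\<Sum>v\<in>Rp. (v $ i) *\<^sub>R v) b l"
proof -
  have "(\<Sum>v\<in>Rp. v $ i * tau (refl v) (dquot v (\<lambda>y. wedge y b) x) l) = (\<Sum>v\<in>Rp. - (v $ i * wedge v b l))"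
    using assms by (intro sum.cong refl) (simp add: dquot_wedge tau_refl_wedge)
  then show ?thesis
    unfolding dunkl_def by (simp add: dderiv_wedge wedge_sum_v wedge_scale_v sum_negf)
qed

lemma wedge_basis: "(\<Sum>i\<in>UNIV. a $ i * wedge (axis i 1) b l) = wedge a b l"
proof -
  have "(\<Sum>i\<in>UNIV. a $ i * wedge (axis i 1) b l) = wedge (\<Sum>i\<in>UNIV. a $ i *\<^sub>R axis i 1) b l"
    by (simp add: wedge_sum_v wedge_scale_v)
  also have "(\<Sum>i\<in>UNIV. a $ i *\<^sub>R axis i 1) = a"
    by (simp add: vec_eq_iff axis_def if_distrib cong: if_cong)
  finally show ?thesis .
qed



lemma refl_linear: "linear (refl u)"
  by (rule linearI) (simp_all add: refl_def inner_add_left algebra_simps)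

lemma refl_refl: "u \<bullet> u = 2 \<Longrightarrow> refl u (refl u x) = x"
  by (simp add: refl_def inner_diff_left algebra_simps)

lemma refl_self: "u \<bullet> u = 2 \<Longrightarrow> refl u u = - u"
  by (simp add: refl_def vec_eq_iff)

lemma refl_sym: "refl u x \<bullet> y = x \<bullet> refl u y"
  by (simp add: refl_def inner_diff_left inner_diff_right inner_commute)

definition MM :: "(real^'n) set \<Rightarrow> real^'n \<Rightarrow> real^'n" where
  "MM R x = (\<Sum>v\<in>R. (x \<bullet> v) *\<^sub>R v)"

lemma MM_linear: "linear (MM R)"
  unfolding MM_def
  by (rule linearI) (simp_all add: inner_add_left scaleR_add_left sum.distrib scaleR_sum_right)

lemma MM_refl:
  assumes rs: "root_system R" and u: "u \<in> R"
  shows "MM R (refl u x) = refl u (MM R x)"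
proof -
  have uu: "u \<bullet> u = 2" using rs u unfolding root_system_def by auto
  have bij: "bij_betw (refl u) R R"
    by (rule bij_betwI[where g = "refl u"]) (use rs u uu in \<open>auto simp: root_system_def refl_refl\<close>)
  have "MM R (refl u x) = (\<Sum>v\<in>R. (x \<bullet> refl u v) *\<^sub>R v)"
    unfolding MM_def by (simp add: refl_sym)
  also have "\<dots> = (\<Sum>w\<in>R. (x \<bullet> refl u (refl u w)) *\<^sub>R refl u w)"
    using sum.reindex_bij_betw[OF bij, of "\<lambda>v. (x \<bullet> refl u v) *\<^sub>R v"] by simp
  also have "\<dots> = (\<Sum>w\<in>R. refl u ((x \<bullet> w) *\<^sub>R w))"
    by (simp add: refl_refl[OF uu] linear_scale[OF refl_linear])
  also have "\<dots> = refl u (MM R x)"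
    unfolding MM_def by (simp add: linear_sum[OF refl_linear])
  finally show ?thesis .
qed

lemma group_props:
  assumes rs: "root_system R" and w: "w \<in> refl_group R"
  shows "linear w \<and> (\<forall>x. MM R (w x) = w (MM R x)) \<and> (\<forall>v\<in>R. w v \<in> R)"
  using w
proof (induction rule: refl_group.induct)
  case id_in then show ?case by (simp add: linear_id[unfolded id_def] id_def)
next
  case (step v w)
  have "linear (refl v \<circ> w)" using step linear_compose[OF _ refl_linear] by blast
  moreover have "\<forall>x. MM R ((refl v \<circ> w) x) = (refl v \<circ> w) (MM R x)"
    using step MM_refl[OF rs] by simp
  moreover have "\<forall>u\<in>R. (refl v \<circ> w) u \<in> R"
    using step rs unfolding root_system_def by simp
  ultimately show ?case by blast
qed

lemma MM_eigen:
  assumes rs: "root_system R" and u: "u \<in> R"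
  shows "MM R u = ((MM R u \<bullet> u) / 2) *\<^sub>R u"
proof -
  have uu: "u \<bullet> u = 2" using rs u unfolding root_system_def by auto
  have "MM R (refl u u) = refl u (MM R u)" by (rule MM_refl[OF rs u])
  then have "MM R (- u) = refl u (MM R u)" by (simp only: refl_self[OF uu])
  then have h: "- MM R u = MM R u - (MM R u \<bullet> u) *\<^sub>R u"
    by (simp only: linear_neg[OF MM_linear] refl_def)
  show ?thesis unfolding vec_eq_iff
  proof
    fix i
    have "- (MM R u $ i) = MM R u $ i - (MM R u \<bullet> u) * u $ i"
      using h by (simp add: vec_eq_iff)
    then show "MM R u $ i = (((MM R u \<bullet> u) / 2) *\<^sub>R u) $ i" by simp
  qed
qed

lemma MM_const:
  assumes rs: "root_system R" and orc: "one_refl_class R" and u: "u \<in> R" and v: "v \<in> R"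
  shows "MM R u \<bullet> u = MM R v \<bullet> v"
proof -
  let ?c = "\<lambda>u. (MM R u \<bullet> u) / 2"
  obtain w where w: "w \<in> refl_group R" and rw: "refl (w v) = refl u"
    using orc u v unfolding one_refl_class_def by blast
  have uu: "u \<bullet> u = 2" using rs u unfolding root_system_def by auto
  have u0: "u \<noteq> 0" using rs u unfolding root_system_def by auto
  have gp: "linear w" "\<And>x. MM R (w x) = w (MM R x)" using group_props[OF rs w] by auto
  have "refl (w v) u = - u" using rw refl_self[OF uu] by simp
  then have "u - (u \<bullet> w v) *\<^sub>R w v = - u" by (simp add: refl_def)
  then have "2 *\<^sub>R u = (u \<bullet> w v) *\<^sub>R w v" by (simp add: algebra_simps scaleR_2)
  then have "(1/2) *\<^sub>R (2 *\<^sub>R u) = (1/2) *\<^sub>R ((u \<bullet> w v) *\<^sub>R w v)" by simp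
  then have ut: "u = ((u \<bullet> w v) / 2) *\<^sub>R w v" by simp
  define t where "t = (u \<bullet> w v) / 2"
  have ut': "u = t *\<^sub>R w v" using ut unfolding t_def .
  have "MM R u = t *\<^sub>R MM R (w v)" unfolding ut' by (simp add: linear_scale[OF MM_linear])
  also have "\<dots> = t *\<^sub>R w (?c v *\<^sub>R v)" using MM_eigen[OF rs v] gp(2) by metis
  also have "\<dots> = ?c v *\<^sub>R u" using ut' by (simp add: linear_scale[OF gp(1)])
  finally have "MM R u = ?c v *\<^sub>R u" .
  moreover have "MM R u = ?c u *\<^sub>R u" by (rule MM_eigen[OF rs u])
  ultimately have "?c u *\<^sub>R u = ?c v *\<^sub>R u" by simp
  then have "?c u = ?c v" using u0 by (simp add: scaleR_cancel_right)
  then show ?thesis by simp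
qed

lemma root_key:
  assumes rs: "root_system R" and ps: "positive_system R Rp" and orc: "one_refl_class R"
  shows "(\<Sum>v\<in>Rp. (x \<bullet> v) *\<^sub>R v) = coxeter_number Rp *\<^sub>R x" and "coxeter_number Rp > 0"
proof -
  have fin: "finite R" using rs unfolding root_system_def by auto
  have sp: "span R = UNIV" using rs unfolding root_system_def by auto
  have nR: "v \<in> R \<Longrightarrow> - v \<in> R" for v
    using rs refl_self[of v] unfolding root_system_def by metis
  obtain u0 where u0: "\<forall>v\<in>R. v \<bullet> u0 \<noteq> 0" and Rp: "Rp = {v\<in>R. v \<bullet> u0 > 0}"
    using ps unfolding positive_system_def by blast
  have finp: "finite Rp" using fin Rp by simp
  have Rdec: "R = Rp \<union> uminus ` Rp"
  proof
    show "R \<subseteq> Rp \<union> uminus ` Rp"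
    proof
      fix v assume v: "v \<in> R"
      show "v \<in> Rp \<union> uminus ` Rp"
      proof (cases "v \<bullet> u0 > 0")
        case True then show ?thesis using v Rp by auto
      next
        case False
        then have "(- v) \<bullet> u0 > 0" using u0 v by (simp add: inner_minus_left) (metis less_linear)
        then have "- v \<in> Rp" using Rp nR[OF v] by auto
        then have "- (- v) \<in> uminus ` Rp" by blast
        then show ?thesis by simp
      qed
    qed
    show "Rp \<union> uminus ` Rp \<subseteq> R" using Rp nR by auto
  qed
  have disj: "Rp \<inter> uminus ` Rp = {}" using Rp by (auto simp: inner_minus_left)
  define Mp where "Mp x = (\<Sum>v\<in>Rp. (x \<bullet> v) *\<^sub>R v)" for x
  have MM2: "MM R x = 2 *\<^sub>R Mp x" for x
  proof -
    have "MM R x = (\<Sum>v\<in>Rp. (x \<bullet> v) *\<^sub>R v) + (\<Sum>v\<in>uminus ` Rp. (x \<bullet> v) *\<^sub>R v)"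
      unfolding MM_def by (subst Rdec) (rule sum.union_disjoint, use finp disj in auto)
    also have "(\<Sum>v\<in>uminus ` Rp. (x \<bullet> v) *\<^sub>R v) = (\<Sum>v\<in>Rp. (x \<bullet> v) *\<^sub>R v)"
      by (subst sum.reindex) (auto simp: inj_on_def)
    finally show ?thesis unfolding Mp_def by (simp add: scaleR_2)
  qed
  have Rne: "R \<noteq> {}"
  proof
    assume "R = {}"
    then have "span R = {0}" by simp
    moreover have "axis undefined (1::real) \<in> span R" using sp by simp
    ultimately show False by simp
  qed
  then obtain v0 where v0: "v0 \<in> R" by blast
  define c where "c = (MM R v0 \<bullet> v0) / 2"
  have Mc: "MM R u = c *\<^sub>R u" if "u \<in> R" for u
    using MM_eigen[OF rs that] MM_const[OF rs orc that v0] unfolding c_def by simp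
  have Mall: "MM R x = c *\<^sub>R x" for x
    by (rule linear_eq_on_span[OF MM_linear linear_scale_self Mc]) (use sp in auto)
  have Mpc: "Mp x = (c/2) *\<^sub>R x" for x
  proof -
    have "Mp x = (1/2) *\<^sub>R (2 *\<^sub>R Mp x)" by simp
    also have "\<dots> = (1/2) *\<^sub>R (c *\<^sub>R x)" by (simp only: MM2[symmetric] Mall)
    finally show ?thesis by simp
  qed
  have tr1: "(\<Sum>i\<in>UNIV. Mp (axis i 1) $ i) = real CARD('a) * (c/2)"
    by (simp add: Mpc)
  have tr2: "(\<Sum>i\<in>UNIV. Mp (axis i 1) $ i) = 2 * real (card Rp)"
  proof -
    have "(\<Sum>i\<in>UNIV. Mp (axis i 1) $ i) = (\<Sum>v\<in>Rp. \<Sum>i\<in>UNIV. v $ i * v $ i)"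
      unfolding Mp_def by (simp add: inner_axis1 sum.swap[of _ Rp])
    also have "\<dots> = (\<Sum>v\<in>Rp. v \<bullet> v)" by (simp add: inner_vec_def)
    also have "\<dots> = (\<Sum>v\<in>Rp. 2)" using rs Rp unfolding root_system_def by (intro sum.cong) auto
    finally show ?thesis by simp
  qed
  have cg: "c/2 = coxeter_number Rp"
    using tr1 tr2 unfolding coxeter_number_def by (simp add: field_simps)
  show "(\<Sum>v\<in>Rp. (x \<bullet> v) *\<^sub>R v) = coxeter_number Rp *\<^sub>R x"
    using Mpc[of x] cg unfolding Mp_def by simp
  have "Rp \<noteq> {}"
  proof (cases "v0 \<in> Rp")
    case False then have "- v0 \<in> Rp" using Rdec v0 by auto
    then show ?thesis by auto
  qed auto
  then have "card Rp > 0" using finp by (simp add: card_gt_0_iff)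
  then show "coxeter_number Rp > 0" unfolding coxeter_number_def by simp
qed


theorem theorem3p5:
  fixes R Rp :: "(real^'n) set" and \<kappa> :: real and m :: nat
    and a :: "real^'n" and b :: "'n list \<Rightarrow> real"
  assumes "root_system R" and "positive_system R Rp" and "one_refl_class R"
    and "1 \<le> m" and "m \<le> CARD('n)" and "b \<in> ext_space m"
  shows "(\<forall>l. linear (\<lambda>x. wedge x b l)) \<and> (\<forall>x. wedge x b \<in> ext_space (m + 1))
    \<and> (\<forall>x. (\<lambda>l. \<Sum>i\<in>UNIV. a $ i * dunkl Rp \<kappa> i (\<lambda>y. wedge y b) x l)
            = (\<lambda>l. (1 - coxeter_number Rp * \<kappa>) * wedge a b l))
    \<and> (\<kappa> = 1 / coxeter_number Rp \<longrightarrow> (\<forall>i x. dunkl Rp \<kappa> i (\<lambda>y. wedge y b) x = (\<lambda>l. 0)))"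
proof -
  have ab: "alt_adj b" by (rule ext_alt_adj[OF assms(6)])
  obtain u0 where Rp: "Rp = {v\<in>R. v \<bullet> u0 > 0}"
    using assms(2) unfolding positive_system_def by blast
  have vv: "\<forall>v\<in>Rp. v \<bullet> v = 2" using assms(1) Rp unfolding root_system_def by auto
  have key: "(\<Sum>v\<in>Rp. (v $ i) *\<^sub>R v) = coxeter_number Rp *\<^sub>R axis i 1" for i
    using root_key(1)[OF assms(1-3), of "axis i 1"] by (simp add: inner_axis1)
  have gpos: "coxeter_number Rp > 0" by (rule root_key(2)[OF assms(1-3)])
  have D: "dunkl Rp \<kappa> i (\<lambda>y. wedge y b) x l = (1 - coxeter_number Rp * \<kappa>) * wedge (axis i 1) b l" for i x l
    by (simp add: dunkl_wedge[OF vv ab] key wedge_scale_v algebra_simps)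
  have P1: "\<forall>l. linear (\<lambda>x. wedge x b l)" using linear_wedge by blast
  have P2: "wedge x b \<in> ext_space (m + 1)" for x
  proof -
    have supp: "b l = 0" if "length l \<noteq> m" for l
      using assms(6) that unfolding ext_space_def by blast
    have "wedge x b l = 0" if "length l \<noteq> m + 1" for l
      unfolding wedge_def
    proof (intro sum.neutral ballI)
      fix j assume "j \<in> {..<length l}"
      then have "length (take j l @ drop (Suc j) l) \<noteq> m" using that by auto
      then show "(-1) ^ j * x $ (l ! j) * b (take j l @ drop (Suc j) l) = 0" using supp by simp
    qed
    moreover have "wedge x b (l[i := l ! j, j := l ! i]) = - wedge x b l"
      if "i < length l" "j < length l" "i \<noteq> j" for l i j
      by (rule alt_full[OF wedge_alt_adj[OF ab] that])
    ultimately show ?thesis unfolding ext_space_def by blast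
  qed
  have P3: "(\<lambda>l. \<Sum>i\<in>UNIV. a $ i * dunkl Rp \<kappa> i (\<lambda>y. wedge y b) x l)
            = (\<lambda>l. (1 - coxeter_number Rp * \<kappa>) * wedge a b l)" for x
  proof (rule ext)
    fix l
    have "(\<Sum>i\<in>UNIV. a $ i * dunkl Rp \<kappa> i (\<lambda>y. wedge y b) x l)
        = (1 - coxeter_number Rp * \<kappa>) * (\<Sum>i\<in>UNIV. a $ i * wedge (axis i 1) b l)"
      by (simp add: D sum_distrib_left mult_ac)
    then show "(\<Sum>i\<in>UNIV. a $ i * dunkl Rp \<kappa> i (\<lambda>y. wedge y b) x l)
        = (1 - coxeter_number Rp * \<kappa>) * wedge a b l"
      by (simp add: wedge_basis)
  qed
  have P4: "\<kappa> = 1 / coxeter_number Rp \<longrightarrow> (\<forall>i x. dunkl Rp \<kappa> i (\<lambda>y. wedge y b) x = (\<lambda>l. 0))"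
  proof (intro impI allI ext)
    fix i x l assume k: "\<kappa> = 1 / coxeter_number Rp"
    have "1 - coxeter_number Rp * \<kappa> = 0" using gpos k by simp
    then show "dunkl Rp \<kappa> i (\<lambda>y. wedge y b) x l = 0" by (simp add: D)
  qed
  show ?thesis using P1 P2 P3 P4 by blast
qed

end
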